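(* Let $F$ be a field of characteristic zero and let $\mathcal{Z}=\langle z\rangle$ be the infinite cyclic group. The only Schur rings over $\mathcal{Z}$ are the group ring $F[\mathcal{Z}]$ and the symmetric Schur ring $F[\mathcal{Z}]^{\pm}$.
   Context: For finite $C\subseteq G$, $\overline{C}=\sum_{g\in C}g\in F[G]$ and $C^*=\{g^{-1}\mid g\in C\}$. A Schur ring over a group $G$ is an $F$-subspace $\mathfrak{S}=\operatorname{Span}_F\{\overline{C}\mid C\in\mathcal{D}(\mathfrak{S})\}$ of $F[G]$ where $\mathcal{D}(\mathfrak{S})$ is a partition of $G$ into finite sets such that (i) $\{1\}\in\mathcal{D}(\mathfrak{S})$; (ii) $C\in\mathcal{D}(\mathfrak{S})\Rightarrow C^*\in\mathcal{D}(\mathfrak{S})$; (iii) for all $C,D\in\mathcal{D}(\mathfrak{S})$, $\overline{C}\,\overline{D}=\sum_{E}\lambda_{CDE}\overline{E}$ with finitely many nonzero $\lambda_{CDE}\in F$. The group ring $F[G]$ is the Schur ring with partition into singletons. For abelian $G$, the symmetric Schur ring $F[G]^{\pm}$ is the Schur ring with partition $\{\{g,g^{-1}\}\mid g\in G\}$. *)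

theory Defs
  imports Main
begin

text \<open>The infinite cyclic group Z = <z> is modelled as the additive group int
  (z^n corresponds to n; identity 0; inverse is negation).
  The group algebra F[Z] is modelled as finitely supported functions int => F,
  an element f standing for the formal sum of f(g) g.\<close>

definition fin_supp :: "(int \<Rightarrow> 'a::zero) \<Rightarrow> bool" where
  "fin_supp f \<longleftrightarrow> finite {g. f g \<noteq> 0}"

definition sset :: "int set \<Rightarrow> int \<Rightarrow> 'a::{zero,one}" where
  "sset C = (\<lambda>g. if g \<in> C then 1 else 0)"

definition gmult :: "(int \<Rightarrow> 'a::comm_ring_1) \<Rightarrow> (int \<Rightarrow> 'a) \<Rightarrow> int \<Rightarrow> 'a" where
  "gmult f h = (\<lambda>g. \<Sum>x\<in>{x. f x \<noteq> 0}. f x * h (g - x))"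

definition lin_comb :: "int set set \<Rightarrow> (int set \<Rightarrow> 'a::comm_ring_1) \<Rightarrow> int \<Rightarrow> 'a" where
  "lin_comb D lam = (\<lambda>g. \<Sum>E\<in>{E\<in>D. lam E \<noteq> 0}. lam E * sset E g)"

definition span_sets :: "int set set \<Rightarrow> (int \<Rightarrow> 'a::comm_ring_1) set" where
  "span_sets D = {f. \<exists>lam. finite {E\<in>D. lam E \<noteq> 0} \<and> f = lin_comb D lam}"

definition finite_partition :: "int set set \<Rightarrow> bool" where
  "finite_partition D \<longleftrightarrow>
     (\<forall>C\<in>D. C \<noteq> {} \<and> finite C) \<and>
     (\<forall>C\<in>D. \<forall>C'\<in>D. C \<noteq> C' \<longrightarrow> C \<inter> C' = {}) \<and>
     \<Union>D = UNIV"

definition schur_ring :: "int set set \<Rightarrow> (int \<Rightarrow> 'a::field) set \<Rightarrow> bool" where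
  "schur_ring D S \<longleftrightarrow>
     finite_partition D \<and>
     {0} \<in> D \<and>
     (\<forall>C\<in>D. uminus ` C \<in> D) \<and>
     (\<forall>C\<in>D. \<forall>C'\<in>D. \<exists>lam :: int set \<Rightarrow> 'a.
         finite {E\<in>D. lam E \<noteq> 0} \<and> gmult (sset C) (sset C') = lin_comb D lam) \<and>
     S = span_sets D"

definition group_ring :: "(int \<Rightarrow> 'a::field) set" where
  "group_ring = span_sets {{g} | g. True}"

definition sym_schur_ring :: "(int \<Rightarrow> 'a::field) set" where
  "sym_schur_ring = span_sets {{g, -g} | g. True}"

end

theory Submission
  imports Defs "HOL-Library.Poly_Mapping" "HOL-Computational_Algebra.Primes"
begin


lemma binom_frob:
  fixes a b :: "'a::comm_ring_1"
  assumes "prime (p::nat)"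
  shows "\<exists>d. (a + b) ^ p = a ^ p + b ^ p + of_nat p * d"
proof -
  have p0: "p > 0" using assms prime_gt_0_nat by blast
  have "(a + b) ^ p = (\<Sum>k\<le>p. of_nat (p choose k) * a ^ k * b ^ (p - k))"
    by (rule binomial_ring)
  also have "\<dots> = (\<Sum>k\<in>{0<..<p}. of_nat (p choose k) * a ^ k * b ^ (p - k)) + a ^ p + b ^ p"
  proof -
    have e: "{..p} = insert 0 (insert p {0<..<p})" using p0 by auto
    show ?thesis unfolding e using p0 by (simp add: algebra_simps)
  qed
  also have "(\<Sum>k\<in>{0<..<p}. of_nat (p choose k) * a ^ k * b ^ (p - k))
      = of_nat p * (\<Sum>k\<in>{0<..<p}. of_nat ((p choose k) div p) * a ^ k * b ^ (p - k))"
  proof -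
    have "of_nat (p choose k) = (of_nat p * of_nat ((p choose k) div p) :: 'a)" if "k \<in> {0<..<p}" for k
    proof -
      have "p dvd (p choose k)" using dvd_choose_prime[of k p] that assms p0 by auto
      then show ?thesis by (metis dvd_mult_div_cancel of_nat_mult)
    qed
    then show ?thesis by (simp add: sum_distrib_left mult.assoc)
  qed
  finally have "(a + b) ^ p = of_nat p * (\<Sum>k\<in>{0<..<p}. of_nat ((p choose k) div p) * a ^ k * b ^ (p - k)) + a ^ p + b ^ p" .
  then show ?thesis by (intro exI[of _ "(\<Sum>k\<in>{0<..<p}. of_nat ((p choose k) div p) * a ^ k * b ^ (p - k))"]) (simp add: algebra_simps)
qed

lemma sum_frob:
  fixes f :: "'b \<Rightarrow> 'a::comm_ring_1"
  assumes "prime (p::nat)" "finite A"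
  shows "\<exists>c. (\<Sum>i\<in>A. f i) ^ p = (\<Sum>i\<in>A. f i ^ p) + of_nat p * c"
  using assms(2)
proof (induction A rule: finite_induct)
  case empty
  have "p > 0" using assms prime_gt_0_nat by blast
  then show ?case by (intro exI[of _ 0]) (simp add: power_0_left)
next
  case (insert x F)
  then obtain c where c: "(\<Sum>i\<in>F. f i) ^ p = (\<Sum>i\<in>F. f i ^ p) + of_nat p * c" by blast
  obtain d where d: "(f x + (\<Sum>i\<in>F. f i)) ^ p = f x ^ p + (\<Sum>i\<in>F. f i) ^ p + of_nat p * d"
    using binom_frob[OF assms(1)] by blast
  show ?case using insert c d by (intro exI[of _ "c + d"]) (simp add: algebra_simps)
qed

lemma lookup_scal: "Poly_Mapping.lookup (Poly_Mapping.single 0 (s::'a::comm_ring_1) * p) k = s * Poly_Mapping.lookup p k"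
proof -
  have "Poly_Mapping.lookup (Poly_Mapping.map ((*) s) p) k = s * Poly_Mapping.lookup p k"
    by transfer (simp add: when_def)
  then show ?thesis by (simp add: mult_map_scale_conv_mult)
qed

lemma single_pow: "(Poly_Mapping.single (k::int) (1::'a::comm_semiring_1)) ^ n = Poly_Mapping.single (int n * k) 1"
  by (induction n) (auto simp: mult_single algebra_simps)

abbreviation lk :: "(int \<Rightarrow>\<^sub>0 int) \<Rightarrow> int \<Rightarrow> int" where "lk \<equiv> Poly_Mapping.lookup"

definition ind :: "int set \<Rightarrow> (int \<Rightarrow>\<^sub>0 int)" where
  "ind E = (\<Sum>c\<in>E. Poly_Mapping.single c 1)"

lemma lk_ind: "finite E \<Longrightarrow> lk (ind E) g = (if g \<in> E then 1 else 0)"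
  unfolding ind_def lookup_sum lookup_single
  by (simp add: when_def sum.delta)

lemma sum_ind_card: "finite A \<Longrightarrow> (\<Sum>x\<in>A. if P x then 1 else 0) = (of_nat (card {x\<in>A. P x}) :: 'b::comm_semiring_1)"
  by (simp add: sum.inter_filter[symmetric])

lemma lk_ind_mult:
  assumes "finite C" "finite C'"
  shows "lk (ind C * ind C') g = int (card {x\<in>C. g - x \<in> C'})"
proof -
  have "ind C * ind C' = (\<Sum>c\<in>C. \<Sum>c'\<in>C'. Poly_Mapping.single (c + c') 1)"
    unfolding ind_def sum_product mult_single by simp
  then have "lk (ind C * ind C') g = (\<Sum>c\<in>C. \<Sum>c'\<in>C'. (if g = c + c' then 1 else 0))"
    by (simp add: lookup_sum lookup_single when_def)
  also have "\<dots> = (\<Sum>c\<in>C. \<Sum>c'\<in>C'. (if c' = g - c then 1 else 0))"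
    by (intro sum.cong refl) auto
  also have "\<dots> = (\<Sum>c\<in>C. if g - c \<in> C' then 1 else 0)"
    using assms by (simp add: sum.delta)
  also have "\<dots> = int (card {x\<in>C. g - x \<in> C'})"
    using assms by (simp add: sum_ind_card)
  finally show ?thesis .
qed

lemma scal_mult2:
  "(Poly_Mapping.single 0 s * X) * (Poly_Mapping.single 0 t * Y) = Poly_Mapping.single (0::int) ((s::int) * t) * (X * Y)"
proof -
  have "(Poly_Mapping.single 0 s * X) * (Poly_Mapping.single 0 t * Y) = (Poly_Mapping.single (0::int) s * Poly_Mapping.single 0 t) * (X * Y)"
    by (simp add: algebra_simps)
  then show ?thesis by (simp add: mult_single)
qed

locale zpart =
  fixes D :: "int set set"
  assumes fp: "finite_partition D" and zD: "{0} \<in> D" and negD: "\<forall>C\<in>D. uminus ` C \<in> D"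
    and cntD: "\<And>C C' E g h. C \<in> D \<Longrightarrow> C' \<in> D \<Longrightarrow> E \<in> D \<Longrightarrow> g \<in> E \<Longrightarrow> h \<in> E \<Longrightarrow>
        card {x\<in>C. h - x \<in> C'} = card {x\<in>C. g - x \<in> C'}"
begin

definition cls :: "int \<Rightarrow> int set" where "cls g = (THE E. E \<in> D \<and> g \<in> E)"

lemma fp1: "C \<in> D \<Longrightarrow> C \<noteq> {} \<and> finite C"
  using fp unfolding finite_partition_def by blast

lemma fp2: "C \<in> D \<Longrightarrow> C' \<in> D \<Longrightarrow> C \<noteq> C' \<Longrightarrow> C \<inter> C' = {}"
  using fp unfolding finite_partition_def by blast

lemma fp3: "\<Union>D = UNIV"
  using fp unfolding finite_partition_def by blast

lemma cls_ex1: "\<exists>!E. E \<in> D \<and> g \<in> E"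
proof -
  have "g \<in> \<Union>D" using fp3 by simp
  then obtain E where E: "E \<in> D" "g \<in> E" by blast
  have u: "E' = E" if "E' \<in> D" "g \<in> E'" for E'
  proof (rule ccontr)
    assume "E' \<noteq> E"
    then have "E' \<inter> E = {}" using fp2[OF that(1) E(1)] by simp
    then show False using that(2) E(2) by blast
  qed
  show ?thesis using E u by blast
qed

lemma cls_both: "cls g \<in> D \<and> g \<in> cls g"
  unfolding cls_def by (rule theI'[OF cls_ex1])

lemma cls_in: "cls g \<in> D"
  using cls_both by simp

lemma mem_cls: "g \<in> cls g"
  using cls_both by simp

lemma cls_eq: "E \<in> D \<Longrightarrow> g \<in> E \<Longrightarrow> cls g = E"
  unfolding cls_def by (rule the1_equality[OF cls_ex1]) simp

lemma fin_cls: "finite (cls g)"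
  using fp1[OF cls_in] by simp

lemma cls_sym: "x \<in> cls n \<Longrightarrow> cls x = cls n"
  by (rule cls_eq[OF cls_in])

lemma cls0: "cls 0 = {0}"
  by (rule cls_eq[OF zD]) simp

lemma cls_neg: "cls (- g) = uminus ` cls g"
proof (rule cls_eq)
  show "uminus ` cls g \<in> D" using negD cls_in by blast
  show "- g \<in> uminus ` cls g" using mem_cls by blast
qed

lemma D_eq: "D = range cls"
proof
  show "D \<subseteq> range cls"
  proof
    fix C assume C: "C \<in> D"
    then obtain g where g: "g \<in> C" using fp1 by blast
    have "C = cls g" using cls_eq[OF C g] by simp
    then show "C \<in> range cls" by simp
  qed
  show "range cls \<subseteq> D" using cls_in by blast
qed

definition V :: "(int \<Rightarrow>\<^sub>0 int) \<Rightarrow> bool" where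
  "V a \<longleftrightarrow> (\<forall>g h. h \<in> cls g \<longrightarrow> lk a h = lk a g)"

lemma V_prod_basic: "V (ind (cls u) * ind (cls v))"
  unfolding V_def
proof (intro allI impI)
  fix g h assume "h \<in> cls g"
  then show "lk (ind (cls u) * ind (cls v)) h = lk (ind (cls u) * ind (cls v)) g"
    using cntD[OF cls_in[of u] cls_in[of v] cls_in[of g] mem_cls[of g] \<open>h \<in> cls g\<close>]
    by (simp add: lk_ind_mult fin_cls)
qed

lemma V_add: "V a \<Longrightarrow> V b \<Longrightarrow> V (a + b)"
  unfolding V_def by (simp add: lookup_add)

lemma V_zero: "V 0"
  unfolding V_def by simp

lemma V_sum: "finite A \<Longrightarrow> (\<And>i. i \<in> A \<Longrightarrow> V (f i)) \<Longrightarrow> V (sum f A)"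
  by (induction A rule: finite_induct) (auto intro: V_add V_zero)

lemma V_scal: "V a \<Longrightarrow> V (Poly_Mapping.single 0 s * a)"
  unfolding V_def by (simp add: lookup_scal)

definition val :: "(int \<Rightarrow>\<^sub>0 int) \<Rightarrow> int set \<Rightarrow> int" where
  "val a E = lk a (SOME x. x \<in> E)"

lemma val_cls: "V a \<Longrightarrow> val a (cls g) = lk a g"
proof -
  assume Va: "V a"
  have "\<exists>x. x \<in> cls g" using mem_cls by blast
  then have "(SOME x. x \<in> cls g) \<in> cls g" by (rule someI_ex)
  then show ?thesis using Va unfolding val_def V_def by blast
qed

lemma V_decomp:
  assumes "V a"
  shows "a = (\<Sum>E\<in>cls ` Poly_Mapping.keys a. Poly_Mapping.single 0 (val a E) * ind E)"
proof (rule poly_mapping_eqI)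
  fix k
  have "lk (\<Sum>E\<in>cls ` Poly_Mapping.keys a. Poly_Mapping.single 0 (val a E) * ind E) k
      = (\<Sum>E\<in>cls ` Poly_Mapping.keys a. val a E * (if k \<in> E then 1 else 0))"
    unfolding lookup_sum lookup_scal
    by (intro sum.cong refl) (auto simp: lk_ind fin_cls)
  also have "\<dots> = (\<Sum>E\<in>cls ` Poly_Mapping.keys a. if E = cls k then val a E else 0)"
  proof (intro sum.cong refl)
    fix E assume "E \<in> cls ` Poly_Mapping.keys a"
    then obtain g where g: "E = cls g" by blast
    have "k \<in> E \<longleftrightarrow> E = cls k"
    proof
      assume "k \<in> E" then show "E = cls k" using g cls_sym by simp
    next
      assume "E = cls k" then show "k \<in> E" using mem_cls by simp
    qed
    then show "val a E * (if k \<in> E then 1 else 0) = (if E = cls k then val a E else 0)" by simp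
  qed
  also have "\<dots> = lk a k"
  proof (cases "k \<in> Poly_Mapping.keys a")
    case True
    then show ?thesis by (simp add: val_cls assms)
  next
    case False
    then have "lk a k = 0" by (simp add: in_keys_iff)
    moreover have "cls k \<notin> cls ` Poly_Mapping.keys a"
    proof
      assume "cls k \<in> cls ` Poly_Mapping.keys a"
      then obtain g where "g \<in> Poly_Mapping.keys a" "cls k = cls g" by auto
      then have "k \<in> cls g" using mem_cls[of k] by simp
      then have "lk a k = lk a g" using assms unfolding V_def by blast
      then show False using \<open>g \<in> Poly_Mapping.keys a\<close> \<open>lk a k = 0\<close> by (simp add: in_keys_iff)
    qed
    ultimately show ?thesis by simp
  qed
  finally show "lk a k = lk (\<Sum>E\<in>cls ` Poly_Mapping.keys a. Poly_Mapping.single 0 (val a E) * ind E) k" by simp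
qed

lemma V_mult:
  assumes "V a" "V b"
  shows "V (a * b)"
proof -
  let ?A = "cls ` Poly_Mapping.keys a" and ?B = "cls ` Poly_Mapping.keys b"
  have "a * b = (\<Sum>E\<in>?A. Poly_Mapping.single 0 (val a E) * ind E) * (\<Sum>F\<in>?B. Poly_Mapping.single 0 (val b F) * ind F)"
    using V_decomp[OF assms(1)] V_decomp[OF assms(2)] by simp
  also have "\<dots> = (\<Sum>E\<in>?A. \<Sum>F\<in>?B. Poly_Mapping.single 0 (val a E * val b F) * (ind E * ind F))"
    unfolding sum_product by (intro sum.cong refl) (simp add: scal_mult2)
  finally have e: "a * b = \<dots>" .
  show ?thesis unfolding e
    by (intro V_sum V_scal) (auto intro: V_prod_basic)
qed

lemma V_one: "V 1"
  unfolding V_def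
proof (intro allI impI)
  fix g h assume h: "h \<in> cls g"
  have "h = 0 \<longleftrightarrow> g = 0"
  proof
    assume h0: "h = 0"
    have "cls g = {0}" using cls_sym[OF h] cls0 h0 by simp
    then show "g = 0" using mem_cls[of g] by simp
  next
    assume "g = 0" then show "h = 0" using h cls0 by simp
  qed
  then show "lk 1 h = lk 1 g" by (simp add: lookup_one when_def)
qed

lemma V_pow: "V (ind (cls u) ^ n)"
proof (induction n)
  case 0 then show ?case by (simp add: V_one)
next
  case (Suc n)
  have "V (ind (cls u))"
  proof -
    have "ind (cls u) = ind (cls u) * ind (cls 0)" by (simp add: cls0 ind_def)
    then show ?thesis using V_prod_basic by metis
  qed
  then show ?case using Suc by (simp add: V_mult)
qed


lemma lk_powp:
  assumes "prime p"
  shows "\<exists>Q. \<forall>k. lk (ind (cls y) ^ p) k = (if k \<in> (\<lambda>c. int p * c) ` cls y then 1 else 0) + int p * lk Q k"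
proof -
  have p0: "p > 0" using assms prime_gt_0_nat by blast
  obtain Q where Q: "(\<Sum>c\<in>cls y. Poly_Mapping.single c (1::int)) ^ p
      = (\<Sum>c\<in>cls y. Poly_Mapping.single c 1 ^ p) + of_nat p * Q"
    using sum_frob[OF assms fin_cls] by blast
  have e: "ind (cls y) ^ p = (\<Sum>c\<in>cls y. Poly_Mapping.single (int p * c) 1) + Poly_Mapping.single 0 (int p) * Q"
    using Q by (simp add: ind_def single_pow)
  have "lk (ind (cls y) ^ p) k = (if k \<in> (\<lambda>c. int p * c) ` cls y then 1 else 0) + int p * lk Q k" for k
  proof -
    have s: "(\<Sum>c\<in>cls y. (if k = int p * c then 1 else 0)) = (if k \<in> (\<lambda>c. int p * c) ` cls y then 1 else (0::int))"
    proof (cases "k \<in> (\<lambda>c. int p * c) ` cls y")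
      case True
      then obtain c0 where c0: "c0 \<in> cls y" "k = int p * c0" by auto
      have "(\<Sum>c\<in>cls y. (if k = int p * c then 1 else 0)) = (\<Sum>c\<in>cls y. (if c = c0 then 1 else (0::int)))"
        using p0 c0 by (intro sum.cong refl) auto
      also have "\<dots> = 1" using c0 fin_cls by simp
      finally show ?thesis using True by simp
    next
      case False
      then have "(\<Sum>c\<in>cls y. (if k = int p * c then 1 else 0)) = (\<Sum>c\<in>cls y. (0::int))"
        by (intro sum.cong refl) auto
      then show ?thesis using False by simp
    qed
    show ?thesis unfolding e lookup_add lookup_sum lookup_scal
      using s by (simp add: lookup_single when_def)
  qed
  then show ?thesis by blast
qed

lemma frob_cls:
  assumes "prime p" "z \<in> cls (int p * y)"
  shows "\<exists>w\<in>cls y. z = int p * w"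
proof (rule ccontr)
  assume nz: "\<not> (\<exists>w\<in>cls y. z = int p * w)"
  obtain Q where Q: "\<And>k. lk (ind (cls y) ^ p) k = (if k \<in> (\<lambda>c. int p * c) ` cls y then 1 else 0) + int p * lk Q k"
    using lk_powp[OF assms(1)] by blast
  have "lk (ind (cls y) ^ p) z = lk (ind (cls y) ^ p) (int p * y)"
    using V_pow[of y p] assms(2) unfolding V_def by blast
  moreover have "int p * y \<in> (\<lambda>c. int p * c) ` cls y" using mem_cls by blast
  moreover have "z \<notin> (\<lambda>c. int p * c) ` cls y" using nz by blast
  ultimately have "int p * lk Q z = 1 + int p * lk Q (int p * y)" using Q by simp
  then have "int p * (lk Q z - lk Q (int p * y)) = 1" by (simp add: algebra_simps)
  then have "int p dvd 1" by (metis dvd_triv_left)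
  then have "p = 1" by simp
  then show False using assms(1) by simp
qed

lemma abs_step:
  assumes IH: "\<And>n' x'. nat \<bar>n'\<bar> + nat \<bar>x'\<bar> < nat \<bar>n\<bar> + nat \<bar>x\<bar> \<Longrightarrow> x' \<in> cls n' \<Longrightarrow> \<bar>x'\<bar> = \<bar>n'\<bar>"
    and n2: "\<bar>n\<bar> \<ge> 2" and x: "x \<in> cls n"
  shows "\<bar>x\<bar> = \<bar>n\<bar>"
proof -
  have "nat \<bar>n\<bar> \<noteq> 1" using n2 by simp
  then obtain p where p: "prime p" "p dvd nat \<bar>n\<bar>" using prime_factor_nat by blast
  have p2: "p \<ge> 2" using p(1) by (rule prime_ge_2_nat)
  have "int p dvd int (nat \<bar>n\<bar>)" using p(2) by (simp only: int_dvd_int_iff)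
  moreover have "int (nat \<bar>n\<bar>) = \<bar>n\<bar>" by simp
  ultimately have "int p dvd \<bar>n\<bar>" by simp
  then have "int p dvd n" by (simp only: dvd_abs_iff)
  then obtain m where m: "n = int p * m" by (rule dvdE)
  have "x \<in> cls (int p * m)" using x m by simp
  then obtain w where w: "w \<in> cls m" "x = int p * w" using frob_cls[OF p(1)] by blast
  have mabs: "\<bar>n\<bar> = int p * \<bar>m\<bar>" using m by (simp add: abs_mult)
  have xabs: "\<bar>x\<bar> = int p * \<bar>w\<bar>" using w(2) by (simp add: abs_mult)
  have m0: "m \<noteq> 0" using m n2 by auto
  then have mpos: "\<bar>m\<bar> > 0" by simp
  have pi2: "int p \<ge> 2" using p2 by simp
  have "1 * \<bar>m\<bar> < int p * \<bar>m\<bar>"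
    by (rule mult_strict_right_mono) (use pi2 mpos in linarith)+
  then have lt: "\<bar>m\<bar> < \<bar>n\<bar>" using mabs by simp
  have "1 * \<bar>w\<bar> \<le> int p * \<bar>w\<bar>"
    by (rule mult_right_mono) (use pi2 in linarith, simp)
  then have le: "\<bar>w\<bar> \<le> \<bar>x\<bar>" using xabs by simp
  have "nat \<bar>m\<bar> + nat \<bar>w\<bar> < nat \<bar>n\<bar> + nat \<bar>x\<bar>" using lt le by linarith
  then have "\<bar>w\<bar> = \<bar>m\<bar>" using IH w(1) by blast
  then show ?thesis using mabs xabs by simp
qed

lemma abs_cls: "x \<in> cls n \<Longrightarrow> \<bar>x\<bar> = \<bar>n\<bar>"
proof (induction "nat \<bar>n\<bar> + nat \<bar>x\<bar>" arbitrary: n x rule: less_induct)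
  case less
  have sym: "n \<in> cls x" using cls_sym[OF less.prems] mem_cls[of n] by simp
  show ?case
  proof (cases "\<bar>n\<bar> \<ge> 2")
    case True
    then show ?thesis using abs_step[OF _ True less.prems] less.hyps by blast
  next
    case False
    note F = False
    show ?thesis
    proof (cases "\<bar>x\<bar> \<ge> 2")
      case True
      have "\<bar>n\<bar> = \<bar>x\<bar>"
        using abs_step[of x n, OF _ True sym] less.hyps by (simp add: add.commute)
      then show ?thesis by simp
    next
      case False
      show ?thesis
      proof (cases "n = 0 \<or> x = 0")
        case True
        then show ?thesis using less.prems sym cls0 by auto
      next
        case False
        then show ?thesis using F \<open>\<not> \<bar>x\<bar> \<ge> 2\<close> by linarith
      qed
    qed
  qed
qed

lemma cls_sub: "cls n \<subseteq> {n, -n}"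
proof
  fix x assume "x \<in> cls n"
  then have "\<bar>x\<bar> = \<bar>n\<bar>" by (rule abs_cls)
  then have "x = n \<or> x = - n" by arith
  then show "x \<in> {n, - n}" by blast
qed

lemma cls1: "cls 1 = {1} \<or> cls 1 = {1, -1}"
proof (cases "-1 \<in> cls 1")
  case True
  then have "{1, -1} \<subseteq> cls 1" using mem_cls[of 1] by blast
  then show ?thesis using cls_sub[of 1] by blast
next
  case False
  then have "cls 1 \<subseteq> {1}" using cls_sub[of 1] by blast
  then show ?thesis using mem_cls[of 1] by blast
qed

lemma neg_transfer: "cls (- n) = {- n} \<Longrightarrow> cls n = {n}"
  using cls_neg[of "-n"] by simp

lemma single_case:
  assumes c1: "cls 1 = {1}"
  shows "cls n = {n}"
proof -
  have pos: "cls (int k) = {int k}" if "k \<ge> 1" for k :: nat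
    using that
  proof (induction k rule: less_induct)
    case (less k)
    show ?case
    proof (cases "k = 1")
      case True then show ?thesis using c1 by simp
    next
      case False
      then obtain p where p: "prime p" "p dvd k" using prime_factor_nat by blast
      then obtain m where m: "k = p * m" by (auto elim: dvdE)
      have p2: "p \<ge> 2" using p prime_ge_2_nat by blast
      have m1: "m \<ge> 1" using m less.prems by (cases m) auto
      have "1 * m < p * m" using p2 m1 by (intro mult_strict_right_mono) auto
      then have "m < k" using m by simp
      then have cm: "cls (int m) = {int m}" using less.IH m1 by blast
      have "cls (int k) \<subseteq> {int k}"
      proof
        fix z assume "z \<in> cls (int k)"
        then have "z \<in> cls (int p * int m)" using m by simp
        then obtain w where "w \<in> cls (int m)" "z = int p * w" using frob_cls[OF p(1)] by blast
        then show "z \<in> {int k}" using cm m by simp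
      qed
      then show ?thesis using mem_cls[of "int k"] by auto
    qed
  qed
  show ?thesis
  proof (cases "n > 0")
    case True
    then show ?thesis using pos[of "nat n"] by simp
  next
    case False
    show ?thesis
    proof (cases "n = 0")
      case True then show ?thesis using cls0 by simp
    next
      case False
      then have "- n > 0" using \<open>\<not> n > 0\<close> by simp
      then have "cls (- n) = {- n}" using pos[of "nat (- n)"] by simp
      then show ?thesis by (rule neg_transfer)
    qed
  qed
qed

lemma down_step:
  assumes c1: "cls 1 = {1, -1}" and k: "k \<ge> 2" and ck: "cls k = {k}"
  shows "cls (k - 1) = {k - 1}"
proof (rule ccontr)
  assume ne: "cls (k - 1) \<noteq> {k - 1}"
  have "1 - k \<in> cls (k - 1)"
  proof (rule ccontr)
    assume nin: "1 - k \<notin> cls (k - 1)"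
    have "cls (k - 1) \<subseteq> {k - 1}"
    proof
      fix x assume "x \<in> cls (k - 1)"
      then have "x = k - 1 \<or> x = - (k - 1)" using cls_sub[of "k - 1"] by blast
      then show "x \<in> {k - 1}" using nin \<open>x \<in> cls (k - 1)\<close> by auto
    qed
    then show False using ne mem_cls[of "k - 1"] by blast
  qed
  then have "card {x\<in>cls k. (1 - k) - x \<in> cls 1} = card {x\<in>cls k. (k - 1) - x \<in> cls 1}"
    by (rule cntD[OF cls_in[of k] cls_in[of 1] cls_in[of "k - 1"] mem_cls[of "k - 1"]])
  moreover have "{x\<in>cls k. (1 - k) - x \<in> cls 1} = {}"
  proof -
    have "\<not> ((1 - k) - k = 1 \<or> (1 - k) - k = -1)" using k by linarith
    then show ?thesis unfolding ck c1 by blast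
  qed
  moreover have "{x\<in>cls k. (k - 1) - x \<in> cls 1} = {k}"
    unfolding ck c1 by auto
  ultimately show False by simp
qed

lemma pair_case:
  assumes c1: "cls 1 = {1, -1}"
  shows "cls n = {n, -n}"
proof -
  have down: "cls (int k) \<noteq> {int k}" if "k \<ge> 1" for k :: nat
    using that
  proof (induction k)
    case 0 then show ?case by simp
  next
    case (Suc k)
    show ?case
    proof (cases "k = 0")
      case True then show ?thesis using c1 by auto
    next
      case False
      show ?thesis
      proof
        assume "cls (int (Suc k)) = {int (Suc k)}"
        moreover have "int (Suc k) \<ge> 2" using False by simp
        ultimately have "cls (int (Suc k) - 1) = {int (Suc k) - 1}"
          using down_step[OF c1] by blast
        then have "cls (int k) = {int k}" by simp
        then show False using Suc.IH False by simp
      qed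
    qed
  qed
  have pos: "cls n = {n, -n}" if "n > 0" for n
  proof -
    have "cls n \<noteq> {n}" using down[of "nat n"] that by simp
    then show ?thesis using cls_sub[of n] mem_cls[of n] by auto
  qed
  show ?thesis
  proof (cases "n > 0")
    case True then show ?thesis by (rule pos)
  next
    case False
    show ?thesis
    proof (cases "n = 0")
      case True then show ?thesis using cls0 by simp
    next
      case False
      then have "- n > 0" using \<open>\<not> n > 0\<close> by simp
      then have "cls (- n) = {- n, n}" using pos[of "- n"] by simp
      then show ?thesis using cls_neg[of "- n"] by auto
    qed
  qed
qed

end

lemma lin_comb_eval:
  fixes lam :: "int set \<Rightarrow> 'a::field"
  assumes fp: "finite_partition D" and fin: "finite {E\<in>D. lam E \<noteq> 0}" and E: "E \<in> D" "g \<in> E"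
  shows "lin_comb D lam g = lam E"
proof -
  have "lin_comb D lam g = (\<Sum>E'\<in>{E\<in>D. lam E \<noteq> 0}. if E' = E then lam E' else 0)"
    unfolding lin_comb_def
  proof (intro sum.cong refl)
    fix E' assume "E' \<in> {E\<in>D. lam E \<noteq> 0}"
    then have "E' \<in> D" by simp
    then have "g \<in> E' \<longleftrightarrow> E' = E" using fp E unfolding finite_partition_def by blast
    then show "lam E' * sset E' g = (if E' = E then lam E' else 0)" by (simp add: sset_def)
  qed
  also have "\<dots> = lam E" using fin E by (simp add: sum.delta')
  finally show ?thesis .
qed

lemma gmult_sset:
  assumes "finite C"
  shows "gmult (sset C) (sset C') g = (of_nat (card {x\<in>C. g - x \<in> C'}) :: 'a::field)"
proof -
  have "{x. (sset C x :: 'a) \<noteq> 0} = C" by (auto simp: sset_def)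
  then have "gmult (sset C) (sset C') g = (\<Sum>x\<in>C. (sset C x :: 'a) * sset C' (g - x))"
    by (simp add: gmult_def)
  also have "\<dots> = (\<Sum>x\<in>C. if g - x \<in> C' then 1 else 0)"
    by (intro sum.cong refl) (simp add: sset_def)
  also have "\<dots> = of_nat (card {x\<in>C. g - x \<in> C'})" using assms by (simp add: sum_ind_card)
  finally show ?thesis .
qed



lemma fp_fin: "finite_partition D \<Longrightarrow> C \<in> D \<Longrightarrow> finite C"
  unfolding finite_partition_def by blast

theorem theorem3p2:
  fixes D :: "int set set" and S :: "(int \<Rightarrow> 'a::field_char_0) set"
  assumes "schur_ring D S"
  shows "S = group_ring \<or> S = sym_schur_ring"
proof -
  have H: "finite_partition D \<and> {0} \<in> D \<and> (\<forall>C\<in>D. uminus ` C \<in> D) \<and>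
     (\<forall>C\<in>D. \<forall>C'\<in>D. \<exists>lam :: int set \<Rightarrow> 'a.
         finite {E\<in>D. lam E \<noteq> 0} \<and> gmult (sset C) (sset C') = lin_comb D lam) \<and>
     S = span_sets D"
    using assms unfolding schur_ring_def .
  note fp = conjunct1[OF H]
  note z = conjunct1[OF conjunct2[OF H]]
  note ng = conjunct1[OF conjunct2[OF conjunct2[OF H]]]
  note mult = conjunct1[OF conjunct2[OF conjunct2[OF conjunct2[OF H]]]]
  note SD = conjunct2[OF conjunct2[OF conjunct2[OF conjunct2[OF H]]]]
  have cnt: "card {x\<in>C. h - x \<in> C'} = card {x\<in>C. g - x \<in> C'}"
    if "C \<in> D" "C' \<in> D" "E \<in> D" "g \<in> E" "h \<in> E" for C C' E g h
  proof -
    have "\<exists>lam :: int set \<Rightarrow> 'a. finite {E\<in>D. lam E \<noteq> 0} \<and> gmult (sset C) (sset C') = lin_comb D lam"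
      using mult that(1,2) by blast
    then obtain lam :: "int set \<Rightarrow> 'a" where lam: "finite {E\<in>D. lam E \<noteq> 0}" "gmult (sset C) (sset C') = lin_comb D lam"
      by blast
    have fC: "finite C" using fp_fin[OF fp that(1)] .
    have "(of_nat (card {x\<in>C. h - x \<in> C'}) :: 'a) = gmult (sset C) (sset C') h"
      by (rule sym, rule gmult_sset[OF fC])
    also have "\<dots> = lam E" using lin_comb_eval[OF fp lam(1) that(3,5)] lam(2) by simp
    finally have "(of_nat (card {x\<in>C. h - x \<in> C'}) :: 'a) = lam E" .
    moreover have "(of_nat (card {x\<in>C. g - x \<in> C'}) :: 'a) = gmult (sset C) (sset C') g"
      by (rule sym, rule gmult_sset[OF fC])
    moreover have "gmult (sset C) (sset C') g = lam E" using lin_comb_eval[OF fp lam(1) that(3,4)] lam(2) by simp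
    ultimately have "(of_nat (card {x\<in>C. h - x \<in> C'}) :: 'a) = of_nat (card {x\<in>C. g - x \<in> C'})"
      by simp
    then show ?thesis by (simp only: of_nat_eq_iff)
  qed
  have zp: "zpart D"
  proof (rule zpart.intro[OF fp z ng])
    fix C C' E g h assume "C \<in> D" "C' \<in> D" "E \<in> D" "g \<in> E" "h \<in> E"
    then show "card {x\<in>C. h - x \<in> C'} = card {x\<in>C. g - x \<in> C'}" by (rule cnt)
  qed
  interpret zpart D by (rule zp)
  show ?thesis
  proof (cases "cls 1 = {1}")
    case True
    then have cs: "\<And>n. cls n = {n}" using single_case by blast
    have r: "range cls = {{g} | g. True}" by (auto simp: cs)
    have "D = {{g} | g. True}" by (rule trans[OF D_eq r])
    then show ?thesis using SD unfolding group_ring_def by simp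
  next
    case False
    then have "cls 1 = {1, -1}" using cls1 by blast
    then have cs: "\<And>n. cls n = {n, -n}" using pair_case by blast
    have r: "range cls = {{g, -g} | g. True}" by (auto simp: cs)
    have "D = {{g, -g} | g. True}" by (rule trans[OF D_eq r])
    then show ?thesis using SD unfolding sym_schur_ring_def by simp
  qed
qed

end
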